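(* Let $p$ be a prime, $a\ge 1$ an integer, and $n=p^a$. With $L$ and $R$ the matrices indexed by $P(n)$ defined in the context, \[\dim\ker (pR+L)\ge a.\]
   Context: Let $\phi$ denote Euler's totient function. For a positive integer $n$ let $P(n)=\{(i,j): j\mid n,\ i\mid j\}$. Define square matrices $L$ and $R$ with rows and columns indexed by $P(n)$ as follows. For a row index $(i,j)$ and a column index $(d,c)$: $L_{(i,j)}^{(d,c)} = \phi(d)\,\frac{n}{\operatorname{lcm}(j,c)}$ if $d\mid i$ and $j\mid \operatorname{lcm}(i,c)$, and $0$ otherwise. For the row $(i,j)$, let $v$ be the largest divisor of $i$ coprime with $j/i$ and put $u=i/v$. Then $R_{(i,j)}^{(e,c)} = u\,\phi(ev/j)\,\frac{n}{\operatorname{lcm}(j,c)}$ if $(j/v)\mid e$, $e\mid j$ and $j\mid\operatorname{lcm}(i,c)$, and $0$ otherwise. Here $\ker(pR+L)$ may be taken as the left kernel (space of row vectors $w$ with $w(pR+L)=0$); its dimension equals that of the right kernel. *)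

theory Defs
  imports "HOL-Number_Theory.Totient" "HOL-Library.Product_Lexorder"
          "Jordan_Normal_Form.Matrix_Kernel"
begin

definition Pset :: "nat \<Rightarrow> (nat \<times> nat) set" where
  "Pset n = {(i, j). j dvd n \<and> i dvd j}"

(* a fixed enumeration of P(n) (n > 0), used to index rows/columns *)
definition Pidx :: "nat \<Rightarrow> (nat \<times> nat) list" where
  "Pidx n = sorted_list_of_set (Pset n)"

definition Lentry :: "nat \<Rightarrow> nat \<times> nat \<Rightarrow> nat \<times> nat \<Rightarrow> rat" where
  "Lentry n r cl = (case r of (i, j) \<Rightarrow> case cl of (d, c) \<Rightarrow>
     if d dvd i \<and> j dvd lcm i c
     then of_nat (totient d) * of_nat (n div lcm j c) else 0)"

definition vpart :: "nat \<Rightarrow> nat \<Rightarrow> nat" where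
  "vpart i j = (GREATEST v. v dvd i \<and> coprime v (j div i))"

definition upart :: "nat \<Rightarrow> nat \<Rightarrow> nat" where
  "upart i j = i div vpart i j"

definition Rentry :: "nat \<Rightarrow> nat \<times> nat \<Rightarrow> nat \<times> nat \<Rightarrow> rat" where
  "Rentry n r cl = (case r of (i, j) \<Rightarrow> case cl of (e, c) \<Rightarrow>
     (let v = vpart i j; u = upart i j in
      if (j div v) dvd e \<and> e dvd j \<and> j dvd lcm i c
      then of_nat u * of_nat (totient (e * v div j)) * of_nat (n div lcm j c)
      else 0))"

definition Lmat :: "nat \<Rightarrow> rat mat" where
  "Lmat n = mat (length (Pidx n)) (length (Pidx n))
     (\<lambda>(r, c). Lentry n (Pidx n ! r) (Pidx n ! c))"

definition Rmat :: "nat \<Rightarrow> rat mat" where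
  "Rmat n = mat (length (Pidx n)) (length (Pidx n))
     (\<lambda>(r, c). Rentry n (Pidx n ! r) (Pidx n ! c))"

end

theory Submission imports Defs begin

lemma pdvd: "prime (p::nat) \<Longrightarrow> (p^x dvd p^y) = (x \<le> y)"
  by (simp add: dvd_power_iff_le prime_ge_2_nat)

lemma lcm_pp: assumes "prime (p::nat)" shows "lcm (p^x) (p^y) = p^(max x y)"
proof (cases "x \<le> y")
  case True thus ?thesis by (simp add: le_imp_power_dvd lcm_proj2_if_dvd max_def)
next
  case False thus ?thesis by (simp add: le_imp_power_dvd lcm_proj1_if_dvd max_def)
qed

lemma div_pp: assumes "prime (p::nat)" "y \<le> a" shows "p^a div p^y = p^(a-y)"
  using assms by (simp add: power_diff prime_gt_0_nat)

lemma vpart_lt: assumes p: "prime (p::nat)" and st: "s < t" shows "vpart (p^s) (p^t) = 1"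
  unfolding vpart_def
proof (rule Greatest_equality)
  show "1 dvd p ^ s \<and> coprime 1 (p ^ t div p ^ s)" by simp
next
  fix v assume v: "v dvd p ^ s \<and> coprime v (p ^ t div p ^ s)"
  then obtain i where i: "i \<le> s" "v = p^i" using p divides_primepow_nat by blast
  have tt: "p ^ t div p ^ s = p^(t-s)" using div_pp[OF p] st by simp
  show "v \<le> 1"
  proof (cases "i = 0")
    case True thus ?thesis using i by simp
  next
    case False
    have "p dvd v" using i False by (simp add: dvd_power)
    moreover have "p dvd p^(t-s)" using st by (simp add: dvd_power)
    ultimately have "p dvd 1" using v tt by (metis coprime_common_divisor)
    thus ?thesis using p by simp
  qed
qed

lemma vpart_eq: assumes p: "prime (p::nat)" shows "vpart (p^s) (p^s) = p^s"
  unfolding vpart_def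
proof (rule Greatest_equality)
  show "p^s dvd p ^ s \<and> coprime (p^s) (p ^ s div p ^ s)" using p by (simp add: prime_gt_0_nat)
next
  fix v assume v: "v dvd p ^ s \<and> coprime v (p ^ s div p ^ s)"
  thus "v \<le> p^s" using p by (simp add: dvd_imp_le prime_gt_0_nat)
qed

definition Eab :: "nat \<Rightarrow> nat \<Rightarrow> nat \<Rightarrow> nat \<Rightarrow> nat \<Rightarrow> nat \<Rightarrow> rat" where
 "Eab p a s t x y = (if x \<le> s \<and> t \<le> max s y then of_nat (totient (p^x)) * of_nat p ^ (a - max t y) else 0)
   + of_nat p * (if s = t then (if x \<le> s then of_nat (totient (p^x)) * of_nat p ^ (a - max t y) else 0)
       else (if x = t \<and> t \<le> y then of_nat p ^ s * of_nat p ^ (a - max t y) else 0))"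

lemma entry: assumes p: "prime (p::nat)" and st: "s \<le> t" "t \<le> a" and xy: "x \<le> y" "y \<le> a"
  shows "of_nat p * Rentry (p^a) (p^s,p^t) (p^x,p^y) + Lentry (p^a) (p^s,p^t) (p^x,p^y) = Eab p a s t x y"
proof -
  have L: "Lentry (p^a) (p^s,p^t) (p^x,p^y) = (if x \<le> s \<and> t \<le> max s y then of_nat (totient (p^x)) * of_nat p ^ (a - max t y) else 0)"
    unfolding Lentry_def using p st xy by (simp add: pdvd lcm_pp div_pp of_nat_power)
  show ?thesis
  proof (cases "s = t")
    case True
    have "Rentry (p^a) (p^s,p^t) (p^x,p^y) = (if x \<le> s then of_nat (totient (p^x)) * of_nat p ^ (a - max t y) else 0)"
      unfolding Rentry_def upart_def using True p st xy
      by (simp add: pdvd lcm_pp div_pp of_nat_power vpart_eq prime_gt_0_nat)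
    thus ?thesis using L True unfolding Eab_def by simp
  next
    case False
    hence lt: "s < t" using st by simp
    have "Rentry (p^a) (p^s,p^t) (p^x,p^y) = (if x = t \<and> t \<le> y then of_nat p ^ s * of_nat p ^ (a - max t y) else 0)"
      unfolding Rentry_def upart_def using lt p st xy
      by (auto simp add: pdvd lcm_pp div_pp of_nat_power vpart_lt prime_gt_0_nat)
    thus ?thesis using L False unfolding Eab_def by simp
  qed
qed

lemma totq: assumes p: "prime (p::nat)" shows "(of_nat (totient (p^Suc k)) :: rat) = of_nat p ^ k * (of_nat p - 1)"
proof -
  have h: "totient (p^Suc k) = p^k*(p-1)" using totient_prime_power[OF p, of "Suc k"] by simp
  show ?thesis unfolding h using prime_ge_1_nat[OF p] by (simp add: of_nat_diff)
qed

lemma phisum: assumes p: "prime (p::nat)" shows "(\<Sum>x\<le>k. (of_nat (totient (p^x)) :: rat)) = of_nat p ^ k"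
proof (induction k)
  case 0 thus ?case by simp
next
  case (Suc k) thus ?case using totq[OF p, of k] by (simp add: algebra_simps)
qed

lemma SL: assumes p: "prime (p::nat)"
  shows "(\<Sum>x\<le>m. if x \<le> s \<and> Q then (of_nat (totient (p^x)) :: rat) * C else 0) = (if Q then of_nat p ^ (min m s) * C else 0)"
proof (cases Q)
  case True
  have "(\<Sum>x\<le>m. if x \<le> s \<and> Q then (of_nat (totient (p^x)) :: rat) * C else 0) = (\<Sum>x\<in>{..min m s}. (of_nat (totient (p^x)) :: rat) * C)"
    using True by (intro sum.mono_neutral_cong_right) auto
  also have "(\<Sum>x\<in>{..min m s}. (of_nat (totient (p^x)) :: rat) * C) = of_nat p ^ (min m s) * C"
    by (simp add: sum_distrib_right[symmetric] phisum[OF p])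
  finally show ?thesis using True by simp
qed simp

lemma SR: "(\<Sum>x\<le>(m::nat). if x = t \<and> Q then (D::rat) else 0) = (if t \<le> m \<and> Q then D else 0)"
  by (cases Q) (auto simp: sum.delta)

lemma sumEab: assumes p: "prime (p::nat)"
  shows "(\<Sum>x\<le>m. Eab p a s t x y) = (if t \<le> max s y then of_nat p ^ (min m s) * of_nat p ^ (a - max t y) else 0)
     + of_nat p * (if s = t then of_nat p ^ (min m s) * of_nat p ^ (a - max t y)
         else (if t \<le> m \<and> t \<le> y then of_nat p ^ s * of_nat p ^ (a - max t y) else 0))"
proof -
  have "(\<Sum>x\<le>m. Eab p a s t x y) = (\<Sum>x\<le>m. (if x \<le> s \<and> t \<le> max s y then of_nat (totient (p^x)) * of_nat p ^ (a - max t y) else 0))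
     + of_nat p * (if s = t then (\<Sum>x\<le>m. (if x \<le> s \<and> True then of_nat (totient (p^x)) * of_nat p ^ (a - max t y) else 0))
       else (\<Sum>x\<le>m. (if x = t \<and> t \<le> y then of_nat p ^ s * of_nat p ^ (a - max t y) else 0)))"
    unfolding Eab_def by (simp add: sum.distrib sum_distrib_left)
  also have "\<dots> = (if t \<le> max s y then of_nat p ^ (min m s) * of_nat p ^ (a - max t y) else 0)
     + of_nat p * (if s = t then (if True then of_nat p ^ (min m s) * of_nat p ^ (a - max t y) else 0)
         else (if t \<le> m \<and> t \<le> y then of_nat p ^ s * of_nat p ^ (a - max t y) else 0))"
    unfolding SL[OF p] SR ..
  finally show ?thesis by simp
qed

lemma kersum: assumes p: "prime (p::nat)" and st: "s \<le> t" "t \<le> a" and m: "Suc m \<le> a"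
  shows "(\<Sum>x\<le>m. Eab p a s t x m) + Eab p a s t (Suc m) (Suc m) - of_nat p * (\<Sum>x\<le>m. Eab p a s t x (Suc m)) = 0"
proof -
  define q :: rat where "q = of_nat p"
  have am: "a - m = Suc (a - Suc m)" using m by simp
  show ?thesis
  proof (cases "s = t")
    case True
    show ?thesis
    proof (cases "s \<le> m")
      case True2: True
      show ?thesis unfolding sumEab[OF p] using True True2 am
        by (simp add: Eab_def max_def min_def algebra_simps)
    next
      case False
      hence e: "a - max s m = a - s" "a - max s (Suc m) = a - s" "min m s = m" by auto
      have hT: "(of_nat (totient (p * p ^ m))::rat) = of_nat p ^ m * (of_nat p - 1)"
        using totq[OF p, of m] by simp
      show ?thesis unfolding sumEab[OF p] using True False e
        by (simp add: Eab_def hT algebra_simps)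
    qed
  next
    case False
    hence lt: "s < t" using st by simp
    consider "t \<le> m" | "t = Suc m" | "Suc m < t" by linarith
    thus ?thesis
    proof cases
      case 1
      thus ?thesis unfolding sumEab[OF p] using lt am
        by (simp add: Eab_def max_def min_def algebra_simps)
    next
      case 2
      hence "min m s = s" "max s m = m" using lt by auto
      thus ?thesis unfolding sumEab[OF p] using lt am 2
        by (simp add: Eab_def max_def min_def algebra_simps)
    next
      case 3
      thus ?thesis unfolding sumEab[OF p] using lt am
        by (simp add: Eab_def max_def min_def algebra_simps)
    qed
  qed
qed

lemma Pset_pp: assumes p: "prime (p::nat)"
  shows "Pset (p^a) = (\<lambda>(y,x). (p^x,p^y)) ` (SIGMA y:{..a}. {..y})"
proof (rule equalityI; rule subsetI)
  fix z assume "z \<in> Pset (p^a)"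
  then obtain i j where z: "z = (i,j)" "j dvd p^a" "i dvd j" unfolding Pset_def by auto
  obtain y where y: "y \<le> a" "j = p^y" using z(2) p divides_primepow_nat by blast
  obtain x where x: "x \<le> y" "i = p^x" using z(3) y p divides_primepow_nat by blast
  show "z \<in> (\<lambda>(y,x). (p^x,p^y)) ` (SIGMA y:{..a}. {..y})" using x y z by force
next
  fix z assume "z \<in> (\<lambda>(y,x). (p^x,p^y)) ` (SIGMA y:{..a}. {..y})"
  thus "z \<in> Pset (p^a)" unfolding Pset_def by (auto simp: le_imp_power_dvd)
qed

lemma pinj: assumes "prime (p::nat)" shows "(p^x = p^y) = (x = y)"
proof -
  have "1 < p" using assms prime_gt_1_nat by blast
  thus ?thesis by simp
qed

lemma inj_pp: assumes p: "prime (p::nat)" shows "inj_on (\<lambda>(y,x). (p^x,p^y)) A"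
  using p by (auto simp: inj_on_def pinj)

lemma finite_Pset: assumes p: "prime (p::nat)" shows "finite (Pset (p^a))"
  unfolding Pset_pp[OF p] by auto

definition wf :: "nat \<Rightarrow> nat \<Rightarrow> nat \<times> nat \<Rightarrow> rat" where
  "wf p k ij = (case ij of (i,j) \<Rightarrow> if j = p^(k-1) then 1 else if j = p^k then (if i = p^k then 1 else - of_nat p) else 0)"

definition Fk :: "nat \<Rightarrow> nat \<Rightarrow> nat \<Rightarrow> nat \<Rightarrow> rat" where
  "Fk p k x y = (if y = k - 1 then 1 else if y = k then (if x = k then 1 else - of_nat p) else 0)"

lemma wf_pp: assumes p: "prime (p::nat)" shows "wf p k (p^x,p^y) = Fk p k x y"
  unfolding wf_def Fk_def using p by (simp add: pinj)

lemma rowsum: assumes p: "prime (p::nat)" and st: "s \<le> t" "t \<le> a" and k: "1 \<le> k" "k \<le> a"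
  shows "(\<Sum>c\<in>Pset (p^a). (of_nat p * Rentry (p^a) (p^s,p^t) c + Lentry (p^a) (p^s,p^t) c) * wf p k c) = 0"
proof -
  obtain m where km: "k = Suc m" using k by (cases k) auto
  have "(\<Sum>c\<in>Pset (p^a). (of_nat p * Rentry (p^a) (p^s,p^t) c + Lentry (p^a) (p^s,p^t) c) * wf p k c)
     = (\<Sum>(y,x)\<in>(SIGMA y:{..a}. {..y}). Eab p a s t x y * Fk p k x y)"
    unfolding Pset_pp[OF p] by (subst sum.reindex[OF inj_pp[OF p]]) (auto intro!: sum.cong simp: entry[OF p st] wf_pp[OF p])
  also have "\<dots> = (\<Sum>y\<le>a. \<Sum>x\<le>y. Eab p a s t x y * Fk p k x y)"
    by (subst sum.Sigma) auto
  also have "\<dots> = (\<Sum>y\<le>a. (if y = m then (\<Sum>x\<le>m. Eab p a s t x m) else 0)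
      + (if y = Suc m then Eab p a s t (Suc m) (Suc m) - of_nat p * (\<Sum>x\<le>m. Eab p a s t x (Suc m)) else 0))"
  proof (rule sum.cong[OF refl])
    fix y
    show "(\<Sum>x\<le>y. Eab p a s t x y * Fk p k x y) = (if y = m then (\<Sum>x\<le>m. Eab p a s t x m) else 0)
      + (if y = Suc m then Eab p a s t (Suc m) (Suc m) - of_nat p * (\<Sum>x\<le>m. Eab p a s t x (Suc m)) else 0)"
      unfolding Fk_def km by (auto simp: sum_distrib_left sum_negf mult.commute)
  qed
  also have "\<dots> = (\<Sum>x\<le>m. Eab p a s t x m) + Eab p a s t (Suc m) (Suc m) - of_nat p * (\<Sum>x\<le>m. Eab p a s t x (Suc m))"
    using k km by (simp add: sum.distrib)
  also have "\<dots> = 0" using kersum[OF p st] k km by simp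
  finally show ?thesis .
qed

lemma Pidx_set: assumes "finite (Pset n)" shows "set (Pidx n) = Pset n" "distinct (Pidx n)"
  using assms unfolding Pidx_def by auto

lemma sum_Pidx: assumes "finite (Pset n)"
  shows "(\<Sum>c\<in>{0..<length (Pidx n)}. g (Pidx n ! c)) = (\<Sum>q\<in>Pset n. g q)"
  by (rule sum.reindex_bij_betw[OF bij_betw_nth]) (use Pidx_set[OF assms] in auto)

definition Wv :: "nat \<Rightarrow> nat \<Rightarrow> nat \<Rightarrow> rat vec" where
  "Wv p a k = vec (length (Pidx (p^a))) (\<lambda>r. wf p k (Pidx (p^a) ! r))"

lemma Amat_carrier: "of_nat p \<cdot>\<^sub>m Rmat n + Lmat n \<in> carrier_mat (length (Pidx n)) (length (Pidx n))"
  unfolding Rmat_def Lmat_def by auto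

lemma Wv_kernel: assumes p: "prime (p::nat)" and k: "1 \<le> k" "k \<le> a"
  shows "Wv p a k \<in> mat_kernel (of_nat p \<cdot>\<^sub>m Rmat (p^a) + Lmat (p^a))"
proof -
  define n where "n = p^a"
  define N where "N = length (Pidx n)"
  define A where "A = of_nat p \<cdot>\<^sub>m Rmat n + Lmat n"
  have fin: "finite (Pset n)" unfolding n_def by (rule finite_Pset[OF p])
  have A: "A \<in> carrier_mat N N" unfolding A_def N_def by (rule Amat_carrier)
  have W: "Wv p a k \<in> carrier_vec N" unfolding Wv_def N_def n_def by simp
  have "A *\<^sub>v Wv p a k = 0\<^sub>v N"
  proof (rule eq_vecI)
    fix r assume "r < dim_vec (0\<^sub>v N :: rat vec)"
    hence r: "r < N" by simp
    have "Pidx n ! r \<in> Pset n" using Pidx_set[OF fin] r unfolding N_def by (metis nth_mem)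
    then obtain s t where st: "s \<le> t" "t \<le> a" "Pidx n ! r = (p^s, p^t)"
      unfolding n_def Pset_pp[OF p] by auto
    have "(A *\<^sub>v Wv p a k) $ r = (\<Sum>c\<in>{0..<N}. A $$ (r,c) * Wv p a k $ c)"
      using A W r by (simp add: scalar_prod_def)
    also have "\<dots> = (\<Sum>c\<in>{0..<N}. (\<lambda>q. (of_nat p * Rentry n (p^s,p^t) q + Lentry n (p^s,p^t) q) * wf p k q) (Pidx n ! c))"
      by (rule sum.cong[OF refl]) (use r st in \<open>simp add: A_def Rmat_def Lmat_def Wv_def N_def n_def\<close>)
    also have "\<dots> = (\<Sum>q\<in>Pset n. (of_nat p * Rentry n (p^s,p^t) q + Lentry n (p^s,p^t) q) * wf p k q)"
      unfolding N_def by (rule sum_Pidx[OF fin])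
    also have "\<dots> = 0" unfolding n_def by (rule rowsum[OF p st(1,2) k])
    finally show "(A *\<^sub>v Wv p a k) $ r = 0\<^sub>v N $ r" using r by simp
  qed (use A in simp)
  thus ?thesis using A W unfolding mat_kernel_def A_def n_def by auto
qed

lemma Fsum: assumes k: "1 \<le> k" "k \<le> a"
  shows "(\<Sum>j\<in>{1..a}. d j * Fk p j x k) = (if Suc k \<le> a then d (Suc k) else 0) + d k * (if x = k then 1 else - of_nat p)"
proof -
  have "(\<Sum>j\<in>{1..a}. d j * Fk p j x k) = (\<Sum>j\<in>{1..a}. (if j = Suc k then d j else 0) + (if j = k then d j * (if x = k then 1 else - of_nat p) else 0))"
    by (rule sum.cong[OF refl]) (use k in \<open>auto simp: Fk_def\<close>)
  also have "\<dots> = (if Suc k \<le> a then d (Suc k) else 0) + d k * (if x = k then 1 else - of_nat p)"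
    using k by (simp add: sum.distrib sum.delta)
  finally show ?thesis .
qed

lemma Wv_at: assumes p: "prime (p::nat)" and P: "P \<in> Pset (p^a)"
  obtains r where "r < length (Pidx (p^a))" "\<And>j. Wv p a j $ r = wf p j P"
proof -
  from P obtain r where "r < length (Pidx (p^a))" "Pidx (p^a) ! r = P"
    using Pidx_set[OF finite_Pset[OF p]] by (metis in_set_conv_nth)
  thus ?thesis using that unfolding Wv_def by auto
qed

lemma coordsum: assumes p: "prime (p::nat)" and k: "1 \<le> k" "k \<le> a" and x: "x \<le> k"
  and inj: "inj_on (Wv p a) {1..a}"
  and Wk: "Wv p a ` {1..a} \<subseteq> mat_kernel (of_nat p \<cdot>\<^sub>m Rmat (p^a) + Lmat (p^a))"
  and lc: "kernel.lincomb (length (Pidx (p^a))) (of_nat p \<cdot>\<^sub>m Rmat (p^a) + Lmat (p^a)) c (Wv p a ` {1..a}) = 0\<^sub>v (length (Pidx (p^a)))"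
  shows "(if Suc k \<le> a then c (Wv p a (Suc k)) else 0) + c (Wv p a k) * (if x = k then 1 else - of_nat p) = 0"
proof -
  define N where "N = length (Pidx (p^a))"
  define A where "A = of_nat p \<cdot>\<^sub>m Rmat (p^a) + Lmat (p^a)"
  have A: "A \<in> carrier_mat N N" unfolding A_def N_def by (rule Amat_carrier)
  interpret K: kernel N N A by unfold_locales (rule A)
  have P: "(p^x, p^k) \<in> Pset (p^a)" unfolding Pset_def using x k by (auto simp: le_imp_power_dvd)
  obtain r where r: "r < N" "\<And>j. Wv p a j $ r = wf p j (p^x,p^k)" using Wv_at[OF p P] unfolding N_def by blast
  have "0 = K.lincomb c (Wv p a ` {1..a}) $ r" using lc r unfolding N_def A_def by simp
  also have "\<dots> = (\<Sum>w\<in>Wv p a ` {1..a}. c w * w $ r)"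
    by (rule K.lincomb_index[OF r(1)]) (use Wk in \<open>simp add: A_def\<close>)
  also have "\<dots> = (\<Sum>j\<in>{1..a}. c (Wv p a j) * Fk p j x k)"
    by (subst sum.reindex[OF inj]) (simp add: r(2) wf_pp[OF p])
  also have "\<dots> = (if Suc k \<le> a then c (Wv p a (Suc k)) else 0) + c (Wv p a k) * (if x = k then 1 else - of_nat p)"
    by (rule Fsum[OF k])
  finally show ?thesis by simp
qed

lemma Wv_inj: assumes p: "prime (p::nat)" shows "inj_on (Wv p a) {1..a}"
proof (rule inj_onI)
  fix j k assume j: "j \<in> {1..a}" and k: "k \<in> {1..a}" and eq: "Wv p a j = Wv p a k"
  have P: "(p^0, p^j) \<in> Pset (p^a)" unfolding Pset_def using j by (auto simp: le_imp_power_dvd)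
  obtain r where r: "r < length (Pidx (p^a))" "\<And>i. Wv p a i $ r = wf p i (p^0,p^j)" using Wv_at[OF p P] by blast
  have "Fk p j 0 j = Fk p k 0 j" using eq r(2)[of j] r(2)[of k] by (simp only: wf_pp[OF p])
  moreover have "(of_nat p :: rat) > 0" using p prime_gt_0_nat by simp
  ultimately show "j = k" using j k unfolding Fk_def by (auto split: if_splits)
qed

theorem proposition5p2:
  fixes p a n :: nat
  assumes "prime p" and "a \<ge> 1" and "n = p ^ a"
  shows "kernel_dim (of_nat p \<cdot>\<^sub>m Rmat n + Lmat n) \<ge> a"
proof -
  note p = assms(1)
  define N where "N = length (Pidx (p^a))"
  define A where "A = of_nat p \<cdot>\<^sub>m Rmat (p^a) + Lmat (p^a)"
  have A: "A \<in> carrier_mat N N" unfolding A_def N_def by (rule Amat_carrier)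
  interpret K: kernel N N A by unfold_locales (rule A)
  obtain B where B: "finite B" "K.basis B" using kernel_basis_exists[OF A] by blast
  have fd: "K.Ker.fin_dim" unfolding K.Ker.fin_dim_def using B by (auto simp: K.Ker.basis_def)
  define W where "W = Wv p a ` {1..a}"
  have inj: "inj_on (Wv p a) {1..a}" by (rule Wv_inj[OF p])
  have Wk: "W \<subseteq> mat_kernel A" unfolding W_def A_def using Wv_kernel[OF p] by auto
  have li: "K.lin_indpt W"
  proof (rule K.Ker.finite_lin_indpt2)
    show "finite W" unfolding W_def by simp
    show "W \<subseteq> mat_kernel A" by (rule Wk)
    fix c assume lc: "K.lincomb c W = 0\<^sub>v N"
    show "\<forall>v\<in>W. c v = 0"
    proof
      fix v assume "v \<in> W"
      then obtain k where k: "1 \<le> k" "k \<le> a" and v: "v = Wv p a k" unfolding W_def by auto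
      have lc': "kernel.lincomb (length (Pidx (p^a))) (of_nat p \<cdot>\<^sub>m Rmat (p^a) + Lmat (p^a)) c (Wv p a ` {1..a}) = 0\<^sub>v (length (Pidx (p^a)))"
        using lc unfolding W_def A_def N_def .
      have Wk': "Wv p a ` {1..a} \<subseteq> mat_kernel (of_nat p \<cdot>\<^sub>m Rmat (p^a) + Lmat (p^a))" using Wk unfolding W_def A_def .
      note e1 = coordsum[OF p k(1) k(2) le_refl inj Wk' lc']
      note e2 = coordsum[OF p k(1) k(2) le0 inj Wk' lc']
      have "c v * (1 + of_nat p) = 0" using e1 e2 k unfolding v by (auto split: if_splits simp: algebra_simps)
      moreover have "(1 + of_nat p :: rat) > 0" by (simp add: add_pos_nonneg)
      ultimately show "c v = 0" by simp
    qed
  qed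
  have "card W \<le> K.dim" using K.Ker.li_le_dim(2)[OF fd Wk li] .
  moreover have "card W = a" unfolding W_def using card_image[OF inj] by simp
  moreover have "kernel_dim A = K.dim" by simp
  ultimately show ?thesis using assms(3) unfolding A_def by simp
qed

end
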